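(* Let $b_+,b_->0$, $\delta_+,\delta_-\in\mathbb{R}$ with $b_\pm+\delta_\pm>0$, $\delta_+\neq0$, $\delta_-\neq 0$, and $c>0$. Let $\hat H_{\mathrm I}(0)$ be the type-I interface Hamiltonian at quasi-momentum $k=0$ (defined in the context). Then $0$ is a two-fold eigenvalue of $\hat H_{\mathrm I}(0)$ (i.e. $0$ is an eigenvalue whose eigenspace in $\ell^2(\mathbb{Z};\mathbb{C}^6)$ is two-dimensional) if and only if $$(b_++\delta_+)(b_-+\delta_-)\,f_1(b_+,\delta_+)\,f_1(b_-,\delta_-)=c^2 .$$
   Context: Coefficients: for $n\in\mathbb Z$ let $b_n=b_+$ for $n\ge0$ and $b_n=b_-$ for $n\le -1$; $c_n=b_++\delta_+$ for $n\ge 0$, $c_{-1}=c$, $c_n=b_-+\delta_-$ for $n\le-2$; $d_n=b_++\delta_+$ for $n\ge0$, $d_n=b_-+\delta_-$ for $n\le -1$. For $k\in[-\pi,\pi)$, $\hat H_{\mathrm I}(k)$ is the bounded self-adjoint operator on $\ell^2(\mathbb Z;\mathbb C^6)$ acting on $u=\{(u_{j,n})_{j=1}^6\}_{n\in\mathbb Z}$ by $(\hat H_{\mathrm I}(k)u)_{1,n}=-b_nu_{4,n}-b_nu_{5,n}-c_{n-1}e^{-ik}u_{6,n-1}$, $(\hat H_{\mathrm I}(k)u)_{2,n}=-b_nu_{4,n}-d_ne^{ik}u_{5,n}-b_nu_{6,n}$, $(\hat H_{\mathrm I}(k)u)_{3,n}=-c_nu_{4,n+1}-b_nu_{5,n}-b_nu_{6,n}$,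 $(\hat H_{\mathrm I}(k)u)_{4,n}=-b_nu_{1,n}-b_nu_{2,n}-c_{n-1}u_{3,n-1}$, $(\hat H_{\mathrm I}(k)u)_{5,n}=-b_nu_{1,n}-d_ne^{-ik}u_{2,n}-b_nu_{3,n}$, $(\hat H_{\mathrm I}(k)u)_{6,n}=-c_ne^{ik}u_{1,n+1}-b_nu_{2,n}-b_nu_{3,n}$. For $b>0$, $\varepsilon>-b$, $\varepsilon\ne0$, put $t=(b+\varepsilon)/b$ and $\alpha=-t^2+2t-\frac4t+\frac4{t^2}$, $\beta=-t^3+t^2+t-3+\frac2t$, $\gamma=t^4-t^2+2t-1$, and $$f_1(b,\varepsilon)=\frac{-\alpha+\gamma-\sqrt{(\alpha-\gamma)^2-4\beta^2}}{2\beta}.$$ *)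

theory Defs
  imports "HOL-Analysis.Analysis" "HOL-Library.Function_Algebras"
begin

definition bcoef :: "real \<Rightarrow> real \<Rightarrow> int \<Rightarrow> real" where
  "bcoef bp bm n = (if n \<ge> 0 then bp else bm)"

definition ccoef :: "real \<Rightarrow> real \<Rightarrow> real \<Rightarrow> real \<Rightarrow> real \<Rightarrow> int \<Rightarrow> real" where
  "ccoef bp bm dp dm c n =
     (if n \<ge> 0 then bp + dp else if n = -1 then c else bm + dm)"

definition dcoef :: "real \<Rightarrow> real \<Rightarrow> real \<Rightarrow> real \<Rightarrow> int \<Rightarrow> real" where
  "dcoef bp bm dp dm n = (if n \<ge> 0 then bp + dp else bm + dm)"

definition HI :: "real \<Rightarrow> real \<Rightarrow> real \<Rightarrow> real \<Rightarrow> real \<Rightarrow> real \<Rightarrow>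
    (int \<Rightarrow> complex ^ 6) \<Rightarrow> (int \<Rightarrow> complex ^ 6)" where
  "HI bp bm dp dm c k u = (\<lambda>n.
     let b = (\<lambda>m. complex_of_real (bcoef bp bm m));
         cc = (\<lambda>m. complex_of_real (ccoef bp bm dp dm c m));
         d = (\<lambda>m. complex_of_real (dcoef bp bm dp dm m));
         e = cis k
     in vector [
       - b n * u n $ 4 - b n * u n $ 5 - cc (n - 1) * cnj e * u (n - 1) $ 6,
       - b n * u n $ 4 - d n * e * u n $ 5 - b n * u n $ 6,
       - cc n * u (n + 1) $ 4 - b n * u n $ 5 - b n * u n $ 6,
       - b n * u n $ 1 - b n * u n $ 2 - cc (n - 1) * u (n - 1) $ 3,
       - b n * u n $ 1 - d n * cnj e * u n $ 2 - b n * u n $ 3,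
       - cc n * e * u (n + 1) $ 1 - b n * u n $ 2 - b n * u n $ 3])"

definition l2seq :: "(int \<Rightarrow> complex ^ 6) \<Rightarrow> bool" where
  "l2seq u \<longleftrightarrow> (\<lambda>n. (norm (u n))\<^sup>2) summable_on UNIV"

definition cscale :: "complex \<Rightarrow> (int \<Rightarrow> complex ^ 6) \<Rightarrow> (int \<Rightarrow> complex ^ 6)" where
  "cscale a u = (\<lambda>n. a *s u n)"

definition eigenspace_HI :: "real \<Rightarrow> real \<Rightarrow> real \<Rightarrow> real \<Rightarrow> real \<Rightarrow> real \<Rightarrow> complex
    \<Rightarrow> (int \<Rightarrow> complex ^ 6) set" where
  "eigenspace_HI bp bm dp dm c k lam =
     {u. l2seq u \<and> HI bp bm dp dm c k u = cscale lam u}"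

definition f1 :: "real \<Rightarrow> real \<Rightarrow> real" where
  "f1 b eps = (let t = (b + eps) / b;
      al = - (t^2) + 2*t - 4/t + 4/t^2;
      be = - (t^3) + t^2 + t - 3 + 2/t;
      ga = t^4 - t^2 + 2*t - 1
    in (- al + ga - sqrt ((al - ga)^2 - 4*be^2)) / (2*be))"

end

theory Submission
  imports Defs
begin

lemma vector_6:
 "(vector [a1,a2,a3,a4,a5,a6] ::('a::zero)^6)$1 = a1"
 "(vector [a1,a2,a3,a4,a5,a6] ::('a::zero)^6)$2 = a2"
 "(vector [a1,a2,a3,a4,a5,a6] ::('a::zero)^6)$3 = a3"
 "(vector [a1,a2,a3,a4,a5,a6] ::('a::zero)^6)$4 = a4"
 "(vector [a1,a2,a3,a4,a5,a6] ::('a::zero)^6)$5 = a5"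
 "(vector [a1,a2,a3,a4,a5,a6] ::('a::zero)^6)$6 = a6"
  unfolding vector_def by simp_all

lemma exhaust_6:
  fixes x :: 6
  shows "x = 1 \<or> x = 2 \<or> x = 3 \<or> x = 4 \<or> x = 5 \<or> x = 6"
proof (induct x)
  case (of_int z)
  then have "z = 0 \<or> z = 1 \<or> z = 2 \<or> z = 3 \<or> z = 4 \<or> z = 5" by fastforce
  then show ?case by auto
qed

lemma UNIV_6: "UNIV = {1, 2, 3, 4, 5, 6::6}"
  using exhaust_6 by auto

lemma norm6: fixes v :: "complex^6"
  shows "(norm v)^2 = (cmod (v$1))^2 + (cmod (v$2))^2 + (cmod (v$3))^2 + (cmod (v$4))^2 + (cmod (v$5))^2 + (cmod (v$6))^2"
  unfolding norm_vec_def L2_set_def UNIV_6 by (simp add: sum_nonneg)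

definition tau :: "real \<Rightarrow> real" where "tau t = (t^3 - t + 2) / t"
definition lam :: "real \<Rightarrow> real" where "lam t = (tau t - sqrt ((tau t)^2 - 4)) / 2"
definition gr :: "real \<Rightarrow> real" where "gr t = (t * lam t - 1) / (t - 1)"

lemma tau_gt2: assumes "t > 0" "t \<noteq> 1" shows "tau t > 2"
proof -
  have "tau t - 2 = (t-1)^2*(t+2)/t" using assms unfolding tau_def
    by (simp add: field_simps power2_eq_square power3_eq_cube)
  moreover have "(t-1)^2*(t+2)/t > 0" using assms by simp
  ultimately show ?thesis by linarith
qed

lemma lam_props: assumes "t > 0" "t \<noteq> 1"
  shows "0 < lam t" "lam t < 1" "(lam t)^2 - tau t * lam t + 1 = 0"
proof -
  define T where "T = tau t"
  define s where "s = sqrt (T^2 - 4)"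
  have T2: "T > 2" using tau_gt2[OF assms] T_def by simp
  have T4: "T*T > 2*2" using T2 by (intro mult_strict_mono) auto
  have "4 \<le> T^2" using T4 by (simp add: power2_eq_square)
  hence ss: "s^2 = T^2 - 4" unfolding s_def by simp
  have s0: "s \<ge> 0" unfolding s_def using \<open>4 \<le> T^2\<close> by simp
  have l: "lam t = (T - s)/2" unfolding lam_def T_def s_def by simp
  have "s < T" proof -
    have "s^2 < T^2" using ss by simp
    thus ?thesis using T2 s0 by (smt (verit) power_mono)
  qed
  thus "0 < lam t" using l by simp
  have "T - 2 < s" proof -
    have "(T-2)^2 < s^2" using ss T2 by (simp add: power2_eq_square algebra_simps)
    thus ?thesis using T2 s0 by (smt (verit) power_mono)
  qed
  thus "lam t < 1" using l by simp
  show "(lam t)^2 - tau t * lam t + 1 = 0" unfolding l T_def[symmetric]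
    using ss by (simp add: power2_eq_square field_simps)
qed

lemma f1_eq: assumes "b > 0" "b + e > 0" "e \<noteq> 0"
  shows "(b + e) * f1 b e = - (b * (1 + gr ((b+e)/b)))"
proof -
  define t where "t = (b+e)/b"
  have t0: "t > 0" using assms t_def by simp
  have t1: "t \<noteq> 1"
  proof
    assume "t = 1"
    then have "b + e = b" using t_def assms by (simp add: field_simps)
    thus False using assms by simp
  qed
  have be: "b + e = b * t" using t_def assms by simp
  define T where "T = tau t"
  define s where "s = sqrt (T^2 - 4)"
  define K where "K = (t^3 - t + 2)/t"
  have K0: "K > 0" proof -
    have "t^3 - t + 2 > 0"
    proof (cases "t \<le> 1")
      case True
      have "t^3 \<ge> 0" using t0 by simp
      thus ?thesis using True by linarith
    next
      case False
      have "t^3 \<ge> t" using False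
        by (smt (verit) mult_le_cancel_left1 power3_eq_cube one_le_power)
      thus ?thesis by linarith
    qed
    thus ?thesis unfolding K_def using t0 by simp
  qed
  define al where "al = - (t^2) + 2*t - 4/t + 4/t^2"
  define bb where "bb = - (t^3) + t^2 + t - 3 + 2/t"
  define ga where "ga = t^4 - t^2 + 2*t - 1"
  have D: "(al - ga)^2 - 4*bb^2 = K^2 * (T^2 - 4)"
    unfolding al_def bb_def ga_def K_def T_def tau_def using t0
    by (simp add: field_simps power2_eq_square power3_eq_cube) algebra
  have sq: "sqrt ((al - ga)^2 - 4*bb^2) = K * s"
    unfolding D s_def using K0 by (simp add: real_sqrt_mult)
  have lt: "lam t = (T - s)/2" unfolding lam_def T_def s_def by simp
  have TT: "T = (t^3 - t + 2)/t" unfolding T_def tau_def by simp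
  have bbK: "bb = - (t - 1) * K" unfolding bb_def K_def using t0
    by (simp add: field_simps power2_eq_square power3_eq_cube)
  have gaal: "ga - al = t^4 - 1 + 4/t - 4/t^2" unfolding al_def ga_def by simp
  have gaK: "ga - al = (t*T + 2*t - 4) * K / t" unfolding gaal K_def TT using t0
    by (simp add: field_simps power2_eq_square power3_eq_cube) algebra
  have f1v: "f1 b e = ((ga - al) - K * s) / (2 * bb)"
    unfolding f1_def Let_def t_def[symmetric] al_def[symmetric] bb_def[symmetric] ga_def[symmetric] sq
    by simp
  have "f1 b e = - (t * lam t + t - 2) / (t * (t - 1))"
    unfolding f1v bbK lt gaK using t0 t1 K0
    by (simp add: field_simps power2_eq_square power3_eq_cube)
  thus ?thesis unfolding be gr_def t_def[symmetric] using t0 t1 assms(1)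
    by (simp add: field_simps) (drule arg_cong[where f="\<lambda>x. b*x"], simp add: algebra_simps)
qed

definition hr :: "real \<Rightarrow> real" where "hr t = -1 - t * gr t"

lemma half_unique:
  fixes X Y Z :: "nat \<Rightarrow> complex" and t :: real
  assumes t0: "t > 0" and t1: "t \<noteq> 1"
    and E1: "\<And>m. X m + of_real t * Y m + Z m = 0"
    and E2: "\<And>m. of_real t * X (Suc m) + Y m + Z m = 0"
    and E3: "\<And>m. X (Suc m) + Y (Suc m) + of_real t * Z m = 0"
    and lim: "X \<longlonglongrightarrow> 0"
  shows "X m = of_real (lam t ^ m) * X 0 \<and> Y m = of_real (gr t * lam t ^ m) * X 0
       \<and> Z m = of_real (hr t * lam t ^ m) * X 0"
proof -
  define l where "l = lam t"
  define T where "T = tau t"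
  have l0: "0 < l" and l1: "l < 1" and lq: "l^2 - T * l + 1 = 0"
    using lam_props[OF t0 t1] unfolding l_def T_def by auto
  define L where "L = T - l"
  have Ll: "L * l = 1" using lq unfolding L_def by (simp add: algebra_simps power2_eq_square)
  have L1: "L \<ge> 1" proof -
    have "L = 1 / l" using Ll l0 by (simp add: field_simps)
    thus ?thesis using l0 l1 by simp
  qed
  have tT: "t * T = t^3 - t + 2" unfolding T_def tau_def using t0 by simp
  have tc1: "(of_real t :: complex) - 1 \<noteq> 0" using t1
    by (metis eq_iff_diff_eq_0 of_real_eq_1_iff)
  have Yf: "(of_real t - 1) * Y m = of_real t * X (Suc m) - X m" for m
  proof -
    have "(of_real t - 1) * Y m = (X m + of_real t * Y m + Z m) - (of_real t * X (Suc m) + Y m + Z m)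
       + of_real t * X (Suc m) - X m" by (simp add: algebra_simps)
    thus ?thesis unfolding E1 E2 by simp
  qed
  have Zf: "Z m = - X m - of_real t * Y m" for m
  proof -
    have "Z m = (X m + of_real t * Y m + Z m) - X m - of_real t * Y m" by simp
    thus ?thesis unfolding E1 by simp
  qed
  have rec: "X (Suc (Suc m)) = of_real T * X (Suc m) - X m" for m
  proof -
    have e: "of_real t * X (Suc (Suc m)) - of_real (t^3 - t + 2) * X (Suc m) + of_real t * X m
       = (of_real t - 1) * (X (Suc m) + Y (Suc m) + of_real t * Z m)
         - ((of_real t - 1) * Y (Suc m) - (of_real t * X (Suc (Suc m)) - X (Suc m)))
         - of_real t * ((of_real t - 1) * Z m - (X m - (of_real t)^2 * X (Suc m)))"
      by (simp add: algebra_simps power2_eq_square power3_eq_cube)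
    have "(of_real t - 1) * Z m = -(of_real t - 1) * X m - of_real t * ((of_real t - 1) * Y m)"
      unfolding Zf[of m] by (simp add: algebra_simps)
    hence z2: "(of_real t - 1) * Z m = X m - (of_real t)^2 * X (Suc m)"
      unfolding Yf by (simp add: algebra_simps power2_eq_square)
    have "of_real t * X (Suc (Suc m)) - of_real (t^3 - t + 2) * X (Suc m) + of_real t * X m = 0"
      unfolding e using E3[of m] Yf[of "Suc m"] z2 by simp
    hence "of_real t * (X (Suc (Suc m)) - of_real T * X (Suc m) + X m) = 0"
      unfolding tT[symmetric] by (simp add: algebra_simps)
    hence h: "X (Suc (Suc m)) - of_real T * X (Suc m) + X m = 0" using t0 by simp
    have "X (Suc (Suc m)) = (X (Suc (Suc m)) - of_real T * X (Suc m) + X m) + of_real T * X (Suc m) - X m"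
      by simp
    thus ?thesis unfolding h by simp
  qed
  define w where "w m = X (Suc m) - of_real l * X m" for m
  have Lc: "of_real L * of_real l = (1::complex)" using Ll by (metis of_real_mult of_real_1)
  have wS: "w (Suc m) = of_real L * w m" for m
  proof -
    have "of_real L * w m = of_real L * X (Suc m) - (of_real L * of_real l) * X m"
      unfolding w_def by (simp add: algebra_simps)
    also have "\<dots> = of_real L * X (Suc m) - X m" unfolding Lc by simp
    also have "\<dots> = w (Suc m)" unfolding w_def rec L_def by (simp add: algebra_simps)
    finally show ?thesis by simp
  qed
  have wp: "w m = of_real (L ^ m) * w 0" for m
    by (induction m) (simp_all add: wS)
  have wlim: "w \<longlonglongrightarrow> 0" unfolding w_def
    using tendsto_diff[OF LIMSEQ_Suc[OF lim] tendsto_mult_left[OF lim, of "of_real l"]] by simp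
  have "norm (w 0) \<le> 0"
  proof (rule LIMSEQ_le_const)
    show "(\<lambda>m. norm (w m)) \<longlonglongrightarrow> 0" using tendsto_norm_zero[OF wlim] .
    show "\<exists>N. \<forall>n\<ge>N. norm (w 0) \<le> norm (w n)"
    proof (intro exI allI impI)
      fix n :: nat
      have "norm (w n) = L ^ n * norm (w 0)" unfolding wp[of n] norm_mult using L1
        by (simp add: norm_power)
      moreover have "1 \<le> L ^ n" using L1 by simp
      ultimately show "norm (w 0) \<le> norm (w n)" by (simp add: mult_le_cancel_right1)
    qed
  qed
  hence w0: "w m = 0" for m using wp[of m] by simp
  define a where "a = X 0"
  have Xf: "X m = of_real (l ^ m) * a" for m
  proof (induction m)
    case (Suc m)
    have "X (Suc m) = of_real l * X m" using w0[of m] unfolding w_def by simp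
    thus ?case unfolding Suc by simp
  qed (simp add: a_def)
  have gq: "(t - 1) * gr t = t * l - 1" unfolding gr_def l_def using t1 by simp
  have gqc: "(of_real t - 1) * of_real (gr t) = (of_real (t * l - 1) :: complex)"
    using arg_cong[OF gq, of "of_real :: real \<Rightarrow> complex"] by simp
  have Yv: "Y m = of_real (gr t * l ^ m) * a"
  proof -
    have "(of_real t - 1) * Y m = of_real (l ^ m) * a * (of_real t * of_real l - 1)"
      unfolding Yf Xf by (simp add: algebra_simps)
    also have "\<dots> = of_real (t*l - 1) * (of_real (l^m) * a)" by (simp add: algebra_simps)
    also have "\<dots> = ((of_real t - 1) * of_real (gr t)) * (of_real (l^m) * a)" unfolding gqc ..
    also have "\<dots> = (of_real t - 1) * (of_real (gr t * l ^ m) * a)" by (simp add: algebra_simps)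
    finally show ?thesis using tc1 by simp
  qed
  have Zv: "Z m = of_real (hr t * l ^ m) * a"
    unfolding Zf Yv Xf hr_def by (simp add: algebra_simps)
  show ?thesis unfolding l_def[symmetric] a_def[symmetric] using Xf[of m] Yv Zv by simp
qed

lemma half_sol:
  fixes t :: real and a :: complex
  assumes t0: "t > 0" and t1: "t \<noteq> 1"
  shows "of_real (lam t ^ m) * a + of_real t * (of_real (gr t * lam t ^ m) * a) + of_real (hr t * lam t ^ m) * a = 0"
    and "of_real t * (of_real (lam t ^ Suc m) * a) + of_real (gr t * lam t ^ m) * a + of_real (hr t * lam t ^ m) * a = 0"
    and "of_real (lam t ^ Suc m) * a + of_real (gr t * lam t ^ Suc m) * a + of_real t * (of_real (hr t * lam t ^ m) * a) = 0"
proof -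
  define l where "l = lam t"
  have lq: "l^2 - tau t * l + 1 = 0" using lam_props[OF t0 t1] unfolding l_def by auto
  have tm1: "t - 1 \<noteq> 0" using t1 by simp
  have "l ^ m + t * (gr t * l ^ m) + hr t * l ^ m = 0"
    unfolding hr_def by (simp add: algebra_simps)
  hence "of_real (l ^ m + t * (gr t * l ^ m) + hr t * l ^ m) * a = 0" by simp
  thus "of_real (lam t ^ m) * a + of_real t * (of_real (gr t * lam t ^ m) * a) + of_real (hr t * lam t ^ m) * a = 0"
    unfolding l_def by (simp add: algebra_simps)
  have r2: "(t - 1) * gr t = t * l - 1"
    unfolding gr_def l_def[symmetric] using tm1 by simp
  have "t * l ^ Suc m + gr t * l ^ m + hr t * l ^ m = l^m * (t * l - 1 - (t - 1) * gr t)"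
    unfolding hr_def by (simp add: algebra_simps)
  hence "t * l ^ Suc m + gr t * l ^ m + hr t * l ^ m = 0" unfolding r2 by simp
  hence "of_real (t * l ^ Suc m + gr t * l ^ m + hr t * l ^ m) * a = 0" by simp
  thus "of_real t * (of_real (lam t ^ Suc m) * a) + of_real (gr t * lam t ^ m) * a + of_real (hr t * lam t ^ m) * a = 0"
    unfolding l_def by (simp add: algebra_simps)
  have tT: "t * tau t = t^3 - t + 2" unfolding tau_def using t0 by simp
  have "(t-1) * (l * (1 + gr t) + t * hr t) = (t-1)*l + l*((t-1)*gr t) - t*(t-1) - t^2*((t-1)*gr t)"
    unfolding hr_def by (simp add: algebra_simps power2_eq_square)
  also have "\<dots> = t * l^2 - (t * tau t) * l + t" unfolding r2 tT
    by (simp add: algebra_simps power2_eq_square power3_eq_cube)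
  finally have r3a: "(t-1) * (l * (1 + gr t) + t * hr t) = t * (l^2 - tau t * l + 1)"
    by (simp add: algebra_simps)
  hence r3: "l * (1 + gr t) + t * hr t = 0" using lq tm1 by simp
  have "l ^ Suc m + gr t * l ^ Suc m + t * (hr t * l ^ m) = l^m * (l * (1 + gr t) + t * hr t)"
    by (simp add: algebra_simps)
  hence "l ^ Suc m + gr t * l ^ Suc m + t * (hr t * l ^ m) = 0" unfolding r3 by simp
  hence "of_real (l ^ Suc m + gr t * l ^ Suc m + t * (hr t * l ^ m)) * a = 0" by simp
  thus "of_real (lam t ^ Suc m) * a + of_real (gr t * lam t ^ Suc m) * a + of_real t * (of_real (hr t * lam t ^ m) * a) = 0"
    unfolding l_def by (simp add: algebra_simps)
qed

definition eqs :: "real \<Rightarrow> real \<Rightarrow> real \<Rightarrow> real \<Rightarrow> real \<Rightarrow> (int \<Rightarrow> complex) \<Rightarrow> (int \<Rightarrow> complex) \<Rightarrow> (int \<Rightarrow> complex) \<Rightarrow> bool" where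
  "eqs bp bm dp dm c x y z \<longleftrightarrow> (\<forall>n.
     let b = complex_of_real (bcoef bp bm n);
         c0 = complex_of_real (ccoef bp bm dp dm c (n - 1));
         c1 = complex_of_real (ccoef bp bm dp dm c n);
         d = complex_of_real (dcoef bp bm dp dm n)
     in b * x n + b * y n + c0 * z (n - 1) = 0 \<and> b * x n + d * y n + b * z n = 0
        \<and> c1 * x (n + 1) + b * y n + b * z n = 0)"

lemma vec6_eq0: "((v::complex^6) = 0) \<longleftrightarrow> v$1 = 0 \<and> v$2 = 0 \<and> v$3 = 0 \<and> v$4 = 0 \<and> v$5 = 0 \<and> v$6 = 0"
proof -
  have f6: "(\<forall>i::6. P i) \<longleftrightarrow> P 1 \<and> P 2 \<and> P 3 \<and> P 4 \<and> P 5 \<and> P 6" for P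
    by (metis exhaust_6)
  show ?thesis unfolding vec_eq_iff zero_index f6 ..
qed

lemma neg3: "(- a - b - c = (0::complex)) = (a + b + c = 0)"
proof -
  have "- a - b - c = -(a + b + c)" by (simp add: algebra_simps)
  thus ?thesis by (simp only: neg_equal_0_iff_equal)
qed

lemma neg3m: "((- a) * x - b - c = (0::complex)) = (a * x + b + c = 0)"
  using neg3[of "a*x" b c] by simp

lemma HI_comp: "HI bp bm dp dm c 0 u n $ 1 = 0 \<longleftrightarrow> complex_of_real (bcoef bp bm n) * u n $ 4 + complex_of_real (bcoef bp bm n) * u n $ 5 + complex_of_real (ccoef bp bm dp dm c (n - 1)) * u (n - 1) $ 6 = 0"
  unfolding HI_def Let_def 
  by (simp only: vector_6 neg3m cis_zero complex_cnj_one mult_1_right)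

lemma HI_eqs: "HI bp bm dp dm c 0 u = cscale 0 u \<longleftrightarrow>
   eqs bp bm dp dm c (\<lambda>n. u n $ 1) (\<lambda>n. u n $ 2) (\<lambda>n. u n $ 3) \<and>
   eqs bp bm dp dm c (\<lambda>n. u n $ 4) (\<lambda>n. u n $ 5) (\<lambda>n. u n $ 6)"
proof -
  have "HI bp bm dp dm c 0 u = cscale 0 u \<longleftrightarrow> (\<forall>n. HI bp bm dp dm c 0 u n = 0)"
    unfolding cscale_def by (auto simp: fun_eq_iff)
  also have "\<dots> \<longleftrightarrow> eqs bp bm dp dm c (\<lambda>n. u n $ 1) (\<lambda>n. u n $ 2) (\<lambda>n. u n $ 3) \<and>
   eqs bp bm dp dm c (\<lambda>n. u n $ 4) (\<lambda>n. u n $ 5) (\<lambda>n. u n $ 6)"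
    apply (simp only: HI_def Let_def vec6_eq0 vector_6 eqs_def cis_zero complex_cnj_one neg3m mult_1_right)
    by blast
  finally show ?thesis .
qed

lemma ofr: assumes "b \<noteq> 0" shows "(of_real (b + e) :: complex) = of_real b * of_real ((b+e)/b)"
proof -
  have "b + e = b * ((b+e)/b)" using assms by simp
  hence "(of_real (b + e) :: complex) = of_real (b * ((b+e)/b))" by (rule arg_cong)
  thus ?thesis by (simp only: of_real_mult)
qed

lemma tform: assumes "b \<noteq> 0"
  shows "(of_real b * x + of_real (b + e) * y + of_real b * z = (0::complex)) \<longleftrightarrow>
         (x + of_real ((b+e)/b) * y + z = 0)"
proof -
  define t where "t = (b+e)/b"
  have o: "(of_real (b + e) :: complex) = of_real b * of_real t" unfolding t_def using ofr[OF assms] .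
  have "of_real b * x + of_real (b + e) * y + of_real b * z = of_real b * (x + of_real ((b+e)/b) * y + z)"
    unfolding o t_def[symmetric] by (simp add: algebra_simps)
  thus ?thesis using assms unfolding t_def by simp
qed

lemma tform2: assumes "b \<noteq> 0"
  shows "(of_real (b + e) * x + of_real b * y + of_real b * z = (0::complex)) \<longleftrightarrow>
         (of_real ((b+e)/b) * x + y + z = 0)"
proof -
  define t where "t = (b+e)/b"
  have o: "(of_real (b + e) :: complex) = of_real b * of_real t" unfolding t_def using ofr[OF assms] .
  have "of_real (b + e) * x + of_real b * y + of_real b * z = of_real b * (of_real ((b+e)/b) * x + y + z)"
    unfolding o t_def[symmetric] by (simp add: algebra_simps)
  thus ?thesis using assms unfolding t_def by simp
qed

lemma tform3: assumes "b \<noteq> 0"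
  shows "(of_real b * x + of_real b * y + of_real (b + e) * z = (0::complex)) \<longleftrightarrow>
         (x + y + of_real ((b+e)/b) * z = 0)"
proof -
  define t where "t = (b+e)/b"
  have o: "(of_real (b + e) :: complex) = of_real b * of_real t" unfolding t_def using ofr[OF assms] .
  have "of_real b * x + of_real b * y + of_real (b + e) * z = of_real b * (x + y + of_real ((b+e)/b) * z)"
    unfolding o t_def[symmetric] by (simp add: algebra_simps)
  thus ?thesis using assms unfolding t_def by simp
qed

lemma eqs_split:
  assumes bp: "bp > 0" and bm: "bm > 0" and E: "eqs bp bm dp dm c x y z"
  defines "tp \<equiv> (bp + dp) / bp" and "tm \<equiv> (bm + dm) / bm"
  shows "x (int m) + of_real tp * y (int m) + z (int m) = 0"
    and "of_real tp * x (int (Suc m)) + y (int m) + z (int m) = 0"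
    and "x (int (Suc m)) + y (int (Suc m)) + of_real tp * z (int m) = 0"
    and "z (-1 - int m) + of_real tm * y (-1 - int m) + x (-1 - int m) = 0"
    and "of_real tm * z (-1 - int (Suc m)) + y (-1 - int m) + x (-1 - int m) = 0"
    and "z (-1 - int (Suc m)) + y (-1 - int (Suc m)) + of_real tm * x (-1 - int m) = 0"
    and "of_real bp * (x 0 + y 0) + of_real c * z (-1) = 0"
    and "of_real c * x 0 + of_real bm * (y (-1) + z (-1)) = 0"
proof -
  have A: "of_real (bcoef bp bm n) * x n + of_real (bcoef bp bm n) * y n + of_real (ccoef bp bm dp dm c (n - 1)) * z (n - 1) = 0"
   and B: "of_real (bcoef bp bm n) * x n + of_real (dcoef bp bm dp dm n) * y n + of_real (bcoef bp bm n) * z n = 0"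
   and C: "of_real (ccoef bp bm dp dm c n) * x (n + 1) + of_real (bcoef bp bm n) * y n + of_real (bcoef bp bm n) * z n = 0"
    for n using E unfolding eqs_def Let_def by auto
  have bp0: "bp \<noteq> 0" and bm0: "bm \<noteq> 0" using bp bm by auto
  have "of_real bp * x (int m) + of_real (bp + dp) * y (int m) + of_real bp * z (int m) = 0"
    using B[of "int m"] by (simp add: bcoef_def dcoef_def)
  thus "x (int m) + of_real tp * y (int m) + z (int m) = 0" unfolding tform[OF bp0] tp_def .
  have "of_real (bp + dp) * x (int (Suc m)) + of_real bp * y (int m) + of_real bp * z (int m) = 0"
    using C[of "int m"] by (simp add: bcoef_def ccoef_def add.commute)
  thus "of_real tp * x (int (Suc m)) + y (int m) + z (int m) = 0" unfolding tform2[OF bp0] tp_def .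
  have "of_real bp * x (int (Suc m)) + of_real bp * y (int (Suc m)) + of_real (bp + dp) * z (int m) = 0"
    using A[of "int (Suc m)"] by (simp add: bcoef_def ccoef_def)
  thus "x (int (Suc m)) + y (int (Suc m)) + of_real tp * z (int m) = 0" unfolding tform3[OF bp0] tp_def .
  have "of_real bm * z (-1 - int m) + of_real (bm + dm) * y (-1 - int m) + of_real bm * x (-1 - int m) = 0"
    using B[of "-1 - int m"] by (simp add: bcoef_def dcoef_def algebra_simps)
  thus "z (-1 - int m) + of_real tm * y (-1 - int m) + x (-1 - int m) = 0" unfolding tform[OF bm0] tm_def .
  have e1: "-1 - int m - 1 = -1 - int (Suc m)" by simp
  have "of_real (bm + dm) * z (-1 - int (Suc m)) + of_real bm * y (-1 - int m) + of_real bm * x (-1 - int m) = 0"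
    using A[of "-1 - int m"] unfolding e1 by (simp add: bcoef_def ccoef_def algebra_simps)
  thus "of_real tm * z (-1 - int (Suc m)) + y (-1 - int m) + x (-1 - int m) = 0" unfolding tform2[OF bm0] tm_def .
  have e2: "-1 - int (Suc m) + 1 = -1 - int m" by simp
  have "of_real bm * z (-1 - int (Suc m)) + of_real bm * y (-1 - int (Suc m)) + of_real (bm + dm) * x (-1 - int m) = 0"
    using C[of "-1 - int (Suc m)"] unfolding e2 by (simp add: bcoef_def ccoef_def algebra_simps)
  thus "z (-1 - int (Suc m)) + y (-1 - int (Suc m)) + of_real tm * x (-1 - int m) = 0" unfolding tform3[OF bm0] tm_def .
  show "of_real bp * (x 0 + y 0) + of_real c * z (-1) = 0"
    using A[of 0] by (simp add: bcoef_def ccoef_def algebra_simps)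
  show "of_real c * x 0 + of_real bm * (y (-1) + z (-1)) = 0"
    using C[of "-1"] by (simp add: bcoef_def ccoef_def algebra_simps)
qed


lemma eqs_glue:
  fixes bp bm dp dm c :: real and x y z :: "int \<Rightarrow> complex"
  assumes bp: "bp > 0" and bm: "bm > 0"
  defines "tp \<equiv> (bp + dp) / bp" and "tm \<equiv> (bm + dm) / bm"
  assumes R1: "\<And>m. x (int m) + of_real tp * y (int m) + z (int m) = 0"
    and R2: "\<And>m. of_real tp * x (int (Suc m)) + y (int m) + z (int m) = 0"
    and R3: "\<And>m. x (int (Suc m)) + y (int (Suc m)) + of_real tp * z (int m) = 0"
    and L1: "\<And>m. z (-1 - int m) + of_real tm * y (-1 - int m) + x (-1 - int m) = 0"
    and L2: "\<And>m. of_real tm * z (-1 - int (Suc m)) + y (-1 - int m) + x (-1 - int m) = 0"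
    and L3: "\<And>m. z (-1 - int (Suc m)) + y (-1 - int (Suc m)) + of_real tm * x (-1 - int m) = 0"
    and I1: "of_real bp * (x 0 + y 0) + of_real c * z (-1) = 0"
    and I2: "of_real c * x 0 + of_real bm * (y (-1) + z (-1)) = 0"
  shows "eqs bp bm dp dm c x y z"
  unfolding eqs_def Let_def
proof (intro allI conjI)
  fix n :: int
  have bp0: "bp \<noteq> 0" and bm0: "bm \<noteq> 0" using bp bm by auto
  show "of_real (bcoef bp bm n) * x n + of_real (dcoef bp bm dp dm n) * y n + of_real (bcoef bp bm n) * z n = 0"
  proof (cases "n \<ge> 0")
    case True
    then obtain m where n: "n = int m" by (metis nonneg_eq_int)
    have "of_real bp * x (int m) + of_real (bp + dp) * y (int m) + of_real bp * z (int m) = 0"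
      unfolding tform[OF bp0] using R1 unfolding tp_def .
    thus ?thesis unfolding n by (simp add: bcoef_def dcoef_def)
  next
    case False
    have "n = -1 - int (nat (-1 - n))" using False by simp
    then obtain m where n: "n = -1 - int m" by blast
    have "of_real bm * z (-1 - int m) + of_real (bm + dm) * y (-1 - int m) + of_real bm * x (-1 - int m) = 0"
      unfolding tform[OF bm0] using L1 unfolding tm_def .
    thus ?thesis unfolding n by (simp add: bcoef_def dcoef_def algebra_simps)
  qed
  show "of_real (bcoef bp bm n) * x n + of_real (bcoef bp bm n) * y n + of_real (ccoef bp bm dp dm c (n - 1)) * z (n - 1) = 0"
  proof (cases "n \<ge> 1")
    case True
    have "n = int (Suc (nat (n - 1)))" using True by simp
    then obtain m where n: "n = int (Suc m)" by blast
    have "of_real bp * x (int (Suc m)) + of_real bp * y (int (Suc m)) + of_real (bp + dp) * z (int m) = 0"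
      unfolding tform3[OF bp0] using R3 unfolding tp_def .
    thus ?thesis unfolding n by (simp add: bcoef_def ccoef_def)
  next
    case False
    show ?thesis
    proof (cases "n = 0")
      case True
      thus ?thesis using I1 by (simp add: bcoef_def ccoef_def algebra_simps)
    next
      case False
      have "n = -1 - int (nat (-1 - n))" using False \<open>\<not> n \<ge> 1\<close> by simp
      then obtain m where n: "n = -1 - int m" by blast
      have e1: "-1 - int m - 1 = -1 - int (Suc m)" by simp
      have "of_real (bm + dm) * z (-1 - int (Suc m)) + of_real bm * y (-1 - int m) + of_real bm * x (-1 - int m) = 0"
        unfolding tform2[OF bm0] using L2 unfolding tm_def .
      thus ?thesis unfolding n e1 by (simp add: bcoef_def ccoef_def algebra_simps)
    qed
  qed
  show "of_real (ccoef bp bm dp dm c n) * x (n + 1) + of_real (bcoef bp bm n) * y n + of_real (bcoef bp bm n) * z n = 0"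
  proof (cases "n \<ge> 0")
    case True
    then obtain m where n: "n = int m" by (metis nonneg_eq_int)
    have "of_real (bp + dp) * x (int (Suc m)) + of_real bp * y (int m) + of_real bp * z (int m) = 0"
      unfolding tform2[OF bp0] using R2 unfolding tp_def .
    thus ?thesis unfolding n by (simp add: bcoef_def ccoef_def add.commute)
  next
    case False
    show ?thesis
    proof (cases "n = -1")
      case True
      thus ?thesis using I2 by (simp add: bcoef_def ccoef_def algebra_simps)
    next
      case False
      have "n = -1 - int (Suc (nat (-2 - n)))" using False \<open>\<not> n \<ge> 0\<close> by simp
      then obtain m where n: "n = -1 - int (Suc m)" by blast
      have e2: "-1 - int (Suc m) + 1 = -1 - int m" by simp
      have "of_real bm * z (-1 - int (Suc m)) + of_real bm * y (-1 - int (Suc m)) + of_real (bm + dm) * x (-1 - int m) = 0"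
        unfolding tform3[OF bm0] using L3 unfolding tm_def .
      thus ?thesis unfolding n e2 by (simp add: bcoef_def ccoef_def algebra_simps)
    qed
  qed
qed

definition solx :: "real \<Rightarrow> real \<Rightarrow> complex \<Rightarrow> complex \<Rightarrow> int \<Rightarrow> complex" where
  "solx tp tm A B n = (if n \<ge> 0 then of_real (lam tp ^ nat n) * A else of_real (hr tm * lam tm ^ nat (-1-n)) * B)"
definition soly :: "real \<Rightarrow> real \<Rightarrow> complex \<Rightarrow> complex \<Rightarrow> int \<Rightarrow> complex" where
  "soly tp tm A B n = (if n \<ge> 0 then of_real (gr tp * lam tp ^ nat n) * A else of_real (gr tm * lam tm ^ nat (-1-n)) * B)"
definition solz :: "real \<Rightarrow> real \<Rightarrow> complex \<Rightarrow> complex \<Rightarrow> int \<Rightarrow> complex" where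
  "solz tp tm A B n = (if n \<ge> 0 then of_real (hr tp * lam tp ^ nat n) * A else of_real (lam tm ^ nat (-1-n)) * B)"

lemma sol_eqs:
  fixes bp bm dp dm c :: real and A B :: complex
  assumes bp: "bp > 0" and bm: "bm > 0" and bpd: "bp + dp > 0" and bmd: "bm + dm > 0"
    and dp: "dp \<noteq> 0" and dm: "dm \<noteq> 0"
  defines "tp \<equiv> (bp + dp) / bp" and "tm \<equiv> (bm + dm) / bm"
  assumes I1: "of_real (bp * (1 + gr tp)) * A + of_real c * B = 0"
    and I2: "of_real c * A + of_real (bm * (1 + gr tm)) * B = 0"
  shows "eqs bp bm dp dm c (solx tp tm A B) (soly tp tm A B) (solz tp tm A B)"
proof -
  have tp0: "tp > 0" unfolding tp_def using bp bpd by simp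
  have tm0: "tm > 0" unfolding tm_def using bm bmd by simp
  have tp1: "tp \<noteq> 1" unfolding tp_def using bp dp by (simp add: field_simps)
  have tm1: "tm \<noteq> 1" unfolding tm_def using bm dm by (simp add: field_simps)
  have m1: "-1 - int (Suc m) < 0" "-1 - int m < 0" "\<not> (0 \<le> -1 - int m)" "\<not> (0 \<le> -1 - int (Suc m))" for m by simp_all
  have m2: "nat (-1 - (-1 - int m)) = m" for m by simp
  show ?thesis
  proof (rule eqs_glue[OF bp bm])
    fix m
    show "solx tp tm A B (int m) + of_real ((bp + dp) / bp) * soly tp tm A B (int m) + solz tp tm A B (int m) = 0"
      unfolding solx_def soly_def solz_def tp_def[symmetric] using half_sol(1)[OF tp0 tp1, of m A] by simp
    show "of_real ((bp + dp) / bp) * solx tp tm A B (int (Suc m)) + soly tp tm A B (int m) + solz tp tm A B (int m) = 0"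
      unfolding solx_def soly_def solz_def tp_def[symmetric] using half_sol(2)[OF tp0 tp1, of m A]
      by (simp del: of_nat_Suc)
    show "solx tp tm A B (int (Suc m)) + soly tp tm A B (int (Suc m)) + of_real ((bp + dp) / bp) * solz tp tm A B (int m) = 0"
      unfolding solx_def soly_def solz_def tp_def[symmetric] using half_sol(3)[OF tp0 tp1, of m A]
      by (simp del: of_nat_Suc)
    show "solz tp tm A B (-1 - int m) + of_real ((bm + dm) / bm) * soly tp tm A B (-1 - int m) + solx tp tm A B (-1 - int m) = 0"
      unfolding solx_def soly_def solz_def tm_def[symmetric] m2 using half_sol(1)[OF tm0 tm1, of m B] m1
      by simp
    show "of_real ((bm + dm) / bm) * solz tp tm A B (-1 - int (Suc m)) + soly tp tm A B (-1 - int m) + solx tp tm A B (-1 - int m) = 0"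
      unfolding solx_def soly_def solz_def tm_def[symmetric] m2 using half_sol(2)[OF tm0 tm1, of m B] m1
      by (simp del: of_nat_Suc)
    show "solz tp tm A B (-1 - int (Suc m)) + soly tp tm A B (-1 - int (Suc m)) + of_real ((bm + dm) / bm) * solx tp tm A B (-1 - int m) = 0"
      unfolding solx_def soly_def solz_def tm_def[symmetric] m2 using half_sol(3)[OF tm0 tm1, of m B] m1
      by (simp del: of_nat_Suc)
  next
    show "of_real bp * (solx tp tm A B 0 + soly tp tm A B 0) + of_real c * solz tp tm A B (-1) = 0"
      unfolding solx_def soly_def solz_def using I1 by (simp add: algebra_simps)
    show "of_real c * solx tp tm A B 0 + of_real bm * (soly tp tm A B (-1) + solz tp tm A B (-1)) = 0"
      unfolding solx_def soly_def solz_def using I2 by (simp add: algebra_simps)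
  qed
qed


lemma sol_unique:
  fixes bp bm dp dm c :: real and x y z :: "int \<Rightarrow> complex"
  assumes bp: "bp > 0" and bm: "bm > 0" and bpd: "bp + dp > 0" and bmd: "bm + dm > 0"
    and dp: "dp \<noteq> 0" and dm: "dm \<noteq> 0"
  defines "tp \<equiv> (bp + dp) / bp" and "tm \<equiv> (bm + dm) / bm"
  assumes E: "eqs bp bm dp dm c x y z"
    and limx: "(\<lambda>m. x (int m)) \<longlonglongrightarrow> 0" and limz: "(\<lambda>m. z (-1 - int m)) \<longlonglongrightarrow> 0"
  shows "x = solx tp tm (x 0) (z (-1))" "y = soly tp tm (x 0) (z (-1))" "z = solz tp tm (x 0) (z (-1))"
    "of_real (bp * (1 + gr tp)) * x 0 + of_real c * z (-1) = 0"
    "of_real c * x 0 + of_real (bm * (1 + gr tm)) * z (-1) = 0"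
proof -
  have tp0: "tp > 0" unfolding tp_def using bp bpd by simp
  have tm0: "tm > 0" unfolding tm_def using bm bmd by simp
  have tp1: "tp \<noteq> 1" unfolding tp_def using bp dp by (simp add: field_simps)
  have tm1: "tm \<noteq> 1" unfolding tm_def using bm dm by (simp add: field_simps)
  note S = eqs_split[OF bp bm E, folded tp_def tm_def]
  have R: "x (int m) = of_real (lam tp ^ m) * x (int 0) \<and> y (int m) = of_real (gr tp * lam tp ^ m) * x (int 0)
       \<and> z (int m) = of_real (hr tp * lam tp ^ m) * x (int 0)" for m
    by (rule half_unique[OF tp0 tp1, where X="\<lambda>m. x (int m)" and Y="\<lambda>m. y (int m)" and Z="\<lambda>m. z (int m)"])
       (use S(1,2,3) limx in auto)
  have L: "z (-1 - int m) = of_real (lam tm ^ m) * z (-1 - int 0) \<and> y (-1 - int m) = of_real (gr tm * lam tm ^ m) * z (-1 - int 0)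
       \<and> x (-1 - int m) = of_real (hr tm * lam tm ^ m) * z (-1 - int 0)" for m
    by (rule half_unique[OF tm0 tm1, where X="\<lambda>m. z (-1 - int m)" and Y="\<lambda>m. y (-1 - int m)" and Z="\<lambda>m. x (-1 - int m)"])
       (use S(4,5,6) limz in auto)
  have cases: "P n" if "\<And>m. P (int m)" "\<And>m. P (-1 - int m)" for P :: "int \<Rightarrow> bool" and n
  proof (cases "n \<ge> 0")
    case True
    hence "n = int (nat n)" by simp
    thus ?thesis using that(1) by metis
  next
    case False
    hence "n = -1 - int (nat (-1 - n))" by simp
    thus ?thesis using that(2) by metis
  qed
  have m1: "\<not> (0 \<le> -1 - int m)" "nat (-1 - (-1 - int m)) = m" for m :: nat by simp_all
  show "x = solx tp tm (x 0) (z (-1))"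
  proof
    fix n show "x n = solx tp tm (x 0) (z (-1)) n"
      by (rule cases[of "\<lambda>n. x n = solx tp tm (x 0) (z (-1)) n"]) (use R L m1 in \<open>auto simp: solx_def\<close>)
  qed
  show "y = soly tp tm (x 0) (z (-1))"
  proof
    fix n show "y n = soly tp tm (x 0) (z (-1)) n"
      by (rule cases[of "\<lambda>n. y n = soly tp tm (x 0) (z (-1)) n"]) (use R L m1 in \<open>auto simp: soly_def\<close>)
  qed
  show "z = solz tp tm (x 0) (z (-1))"
  proof
    fix n show "z n = solz tp tm (x 0) (z (-1)) n"
      by (rule cases[of "\<lambda>n. z n = solz tp tm (x 0) (z (-1)) n"]) (use R L m1 in \<open>auto simp: solz_def\<close>)
  qed
  have y0: "y 0 = of_real (gr tp) * x 0" using R[of 0] by simp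
  have ym: "y (-1) = of_real (gr tm) * z (-1)" using L[of 0] by simp
  show "of_real (bp * (1 + gr tp)) * x 0 + of_real c * z (-1) = 0"
    using S(7) unfolding y0 by (simp add: algebra_simps)
  show "of_real c * x 0 + of_real (bm * (1 + gr tm)) * z (-1) = 0"
    using S(8) unfolding ym by (simp add: algebra_simps)
qed

lemma vs_cscale: "vector_space cscale"
  by unfold_locales (auto simp: cscale_def fun_eq_iff vector_add_ldistrib vector_sadd_rdistrib vector_smult_assoc)

lemma inj_neg: "inj (\<lambda>m::nat. -1 - int m)" by (auto simp: inj_def)

lemma summable_halves:
  fixes f :: "int \<Rightarrow> real"
  assumes f0: "\<And>n. f n \<ge> 0" and S: "f summable_on UNIV"
  shows "summable (\<lambda>m. f (int m))" "summable (\<lambda>m. f (-1 - int m))"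
proof -
  have "f summable_on range int" using summable_on_subset_banach[OF S] by simp
  hence "(f \<circ> int) summable_on UNIV" using summable_on_reindex[of int UNIV f] by simp
  thus "summable (\<lambda>m. f (int m))" using summable_on_UNIV_nonneg_real_iff[of "f \<circ> int"] f0 by (simp add: o_def)
  have "f summable_on range (\<lambda>m::nat. -1 - int m)" using summable_on_subset_banach[OF S] by simp
  hence "(f \<circ> (\<lambda>m::nat. -1 - int m)) summable_on UNIV"
    using summable_on_reindex[of "\<lambda>m::nat. -1 - int m" UNIV f] inj_neg by simp
  thus "summable (\<lambda>m. f (-1 - int m))" using summable_on_UNIV_nonneg_real_iff[of "f \<circ> (\<lambda>m::nat. -1 - int m)"] f0 by (simp add: o_def)
qed

lemma range_split: "range int \<union> range (\<lambda>m::nat. -1 - int m) = UNIV"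
proof -
  have "n \<in> range int \<union> range (\<lambda>m::nat. -1 - int m)" for n :: int
  proof (cases "n \<ge> 0")
    case True
    hence "n = int (nat n)" by simp
    thus ?thesis by blast
  next
    case False
    hence "n = -1 - int (nat (-1 - n))" by simp
    thus ?thesis by blast
  qed
  thus ?thesis by blast
qed

lemma summable_from_halves:
  fixes f :: "int \<Rightarrow> real"
  assumes f0: "\<And>n. f n \<ge> 0" and S1: "summable (\<lambda>m. f (int m))" and S2: "summable (\<lambda>m. f (-1 - int m))"
  shows "f summable_on UNIV"
proof -
  have "(f \<circ> int) summable_on UNIV" using summable_on_UNIV_nonneg_real_iff[of "f \<circ> int"] f0 S1 by (simp add: o_def)
  hence A: "f summable_on range int" using summable_on_reindex[of int UNIV f] by simp
  have "(f \<circ> (\<lambda>m::nat. -1 - int m)) summable_on UNIV"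
    using summable_on_UNIV_nonneg_real_iff[of "f \<circ> (\<lambda>m::nat. -1 - int m)"] f0 S2 by (simp add: o_def)
  hence B: "f summable_on range (\<lambda>m::nat. -1 - int m)"
    using summable_on_reindex[of "\<lambda>m::nat. -1 - int m" UNIV f] inj_neg by simp
  have D: "range int \<inter> range (\<lambda>m::nat. -1 - int m) = {}" by auto
  show ?thesis using summable_on_Un_disjoint[OF A B D] unfolding range_split .
qed

lemma l2_comp_lim:
  assumes "l2seq u"
  shows "(\<lambda>m. u (int m) $ j) \<longlonglongrightarrow> 0" "(\<lambda>m. u (-1 - int m) $ j) \<longlonglongrightarrow> 0"
proof -
  have S: "(\<lambda>n. (norm (u n))\<^sup>2) summable_on UNIV" using assms unfolding l2seq_def .
  note H = summable_halves[of "\<lambda>n. (norm (u n))\<^sup>2", OF _ S]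
  have L1: "(\<lambda>m. (norm (u (int m)))\<^sup>2) \<longlonglongrightarrow> 0" using summable_LIMSEQ_zero[OF H(1)] by simp
  have L2: "(\<lambda>m. (norm (u (-1 - int m)))\<^sup>2) \<longlonglongrightarrow> 0" using summable_LIMSEQ_zero[OF H(2)] by simp
  show "(\<lambda>m. u (int m) $ j) \<longlonglongrightarrow> 0"
  proof (rule Lim_null_comparison)
    show "\<forall>\<^sub>F m in sequentially. norm (u (int m) $ j) \<le> sqrt ((norm (u (int m)))\<^sup>2)"
      by (intro always_eventually allI) (simp add: Finite_Cartesian_Product.norm_nth_le)
    show "(\<lambda>m. sqrt ((norm (u (int m)))\<^sup>2)) \<longlonglongrightarrow> 0" using tendsto_real_sqrt[OF L1] by simp
  qed
  show "(\<lambda>m. u (-1 - int m) $ j) \<longlonglongrightarrow> 0"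
  proof (rule Lim_null_comparison)
    show "\<forall>\<^sub>F m in sequentially. norm (u (-1 - int m) $ j) \<le> sqrt ((norm (u (-1 - int m)))\<^sup>2)"
      by (intro always_eventually allI) (simp add: Finite_Cartesian_Product.norm_nth_le)
    show "(\<lambda>m. sqrt ((norm (u (-1 - int m)))\<^sup>2)) \<longlonglongrightarrow> 0" using tendsto_real_sqrt[OF L2] by simp
  qed
qed

lemma sol_scale:
  "solx tp tm (k*A) (k*B) = (\<lambda>n. k * solx tp tm A B n)"
  "soly tp tm (k*A) (k*B) = (\<lambda>n. k * soly tp tm A B n)"
  "solz tp tm (k*A) (k*B) = (\<lambda>n. k * solz tp tm A B n)"
  by (auto simp: solx_def soly_def solz_def fun_eq_iff algebra_simps)

lemma sol_zero:
  "solx tp tm 0 0 = (\<lambda>n. 0)" "soly tp tm 0 0 = (\<lambda>n. 0)" "solz tp tm 0 0 = (\<lambda>n. 0)"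
  by (auto simp: solx_def soly_def solz_def fun_eq_iff)

lemma eqs_scale:
  assumes "eqs bp bm dp dm c x y z"
  shows "eqs bp bm dp dm c (\<lambda>n. k * x n) (\<lambda>n. k * y n) (\<lambda>n. k * z n)"
proof -
  have h: "a * (k * p) + b * (k * q) + e * (k * r) = k * (a * p + b * q + e * r)" for a b e p q r :: complex
    by (simp add: algebra_simps)
  show ?thesis using assms unfolding eqs_def Let_def h by simp
qed

lemma nsq: "(cmod (of_real r * A))^2 = (r^2) * (cmod A)^2"
  by (simp add: norm_mult power_mult_distrib)

lemma pw: "((x::real)^m)^2 = (x^2)^m" by (simp add: power_mult[symmetric] mult.commute)

lemma sol_l2:
  assumes tp0: "tp > 0" and tp1: "tp \<noteq> 1" and tm0: "tm > 0" and tm1: "tm \<noteq> 1"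
  shows "(\<lambda>n. (cmod (solx tp tm A B n))^2 + (cmod (soly tp tm A B n))^2 + (cmod (solz tp tm A B n))^2) summable_on UNIV"
proof (rule summable_from_halves)
  show "\<And>n. 0 \<le> (cmod (solx tp tm A B n))^2 + (cmod (soly tp tm A B n))^2 + (cmod (solz tp tm A B n))^2"
    by simp
  have lp: "0 < lam tp" "lam tp < 1" using lam_props[OF tp0 tp1] by auto
  have lm: "0 < lam tm" "lam tm < 1" using lam_props[OF tm0 tm1] by auto
  have gp: "norm ((lam tp)^2) < 1" using lp by (simp add: power_less_one_iff abs_square_less_1)
  have gm: "norm ((lam tm)^2) < 1" using lm by (simp add: power_less_one_iff abs_square_less_1)
  have "(\<lambda>m. (cmod (solx tp tm A B (int m)))^2 + (cmod (soly tp tm A B (int m)))^2 + (cmod (solz tp tm A B (int m)))^2)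
     = (\<lambda>m. ((1 + (gr tp)^2 + (hr tp)^2) * (cmod A)^2) * ((lam tp)^2)^m)"
    unfolding solx_def soly_def solz_def
    by (simp add: norm_mult norm_power power_mult_distrib pw abs_of_pos[OF lp(1)] fun_eq_iff) (simp add: algebra_simps)
  moreover have "summable (\<lambda>m. ((1 + (gr tp)^2 + (hr tp)^2) * (cmod A)^2) * ((lam tp)^2)^m)"
    by (rule summable_mult[OF summable_geometric[OF gp]])
  ultimately show "summable (\<lambda>m. (cmod (solx tp tm A B (int m)))^2 + (cmod (soly tp tm A B (int m)))^2 + (cmod (solz tp tm A B (int m)))^2)"
    by simp
  have "(\<lambda>m. (cmod (solx tp tm A B (-1 - int m)))^2 + (cmod (soly tp tm A B (-1 - int m)))^2 + (cmod (solz tp tm A B (-1 - int m)))^2)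
     = (\<lambda>m. ((1 + (gr tm)^2 + (hr tm)^2) * (cmod B)^2) * ((lam tm)^2)^m)"
    unfolding solx_def soly_def solz_def
    by (simp add: norm_mult norm_power power_mult_distrib pw abs_of_pos[OF lm(1)] fun_eq_iff) (simp add: algebra_simps)
  moreover have "summable (\<lambda>m. ((1 + (gr tm)^2 + (hr tm)^2) * (cmod B)^2) * ((lam tm)^2)^m)"
    by (rule summable_mult[OF summable_geometric[OF gm]])
  ultimately show "summable (\<lambda>m. (cmod (solx tp tm A B (-1 - int m)))^2 + (cmod (soly tp tm A B (-1 - int m)))^2 + (cmod (solz tp tm A B (-1 - int m)))^2)"
    by simp
qed

lemma vec6_eq: "((v::complex^6) = w) \<longleftrightarrow> v$1 = w$1 \<and> v$2 = w$2 \<and> v$3 = w$3 \<and> v$4 = w$4 \<and> v$5 = w$5 \<and> v$6 = w$6"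
  using vec6_eq0[of "v - w"] by simp

definition emb :: "(int \<Rightarrow> complex) \<Rightarrow> (int \<Rightarrow> complex) \<Rightarrow> (int \<Rightarrow> complex) \<Rightarrow> complex \<Rightarrow> complex \<Rightarrow> int \<Rightarrow> complex^6" where
  "emb x y z k k' = (\<lambda>n. vector [k * x n, k * y n, k * z n, k' * x n, k' * y n, k' * z n])"

lemma emb_comb: "cscale k (emb x y z 1 0) + cscale k' (emb x y z 0 1) = emb x y z k k'"
  by (auto simp: fun_eq_iff cscale_def emb_def vec6_eq vector_6)

lemma emb_mem:
  assumes E: "eqs bp bm dp dm c x y z"
    and S: "(\<lambda>n. (cmod (x n))^2 + (cmod (y n))^2 + (cmod (z n))^2) summable_on UNIV"
  shows "emb x y z k k' \<in> eigenspace_HI bp bm dp dm c 0 0"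
proof -
  have "l2seq (emb x y z k k')"
  proof -
    have "(\<lambda>n. ((cmod k)^2 + (cmod k')^2) * ((cmod (x n))^2 + (cmod (y n))^2 + (cmod (z n))^2)) summable_on UNIV"
      by (rule summable_on_cmult_right[OF S])
    moreover have "(norm (emb x y z k k' n))^2 = ((cmod k)^2 + (cmod k')^2) * ((cmod (x n))^2 + (cmod (y n))^2 + (cmod (z n))^2)" for n
      unfolding norm6 emb_def by (simp add: vector_6 norm_mult power_mult_distrib algebra_simps)
    ultimately show ?thesis unfolding l2seq_def by simp
  qed
  moreover have "HI bp bm dp dm c 0 (emb x y z k k') = cscale 0 (emb x y z k k')"
    unfolding HI_eqs using eqs_scale[OF E, of k] eqs_scale[OF E, of k'] by (simp add: emb_def vector_6)
  ultimately show ?thesis unfolding eigenspace_HI_def by simp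
qed


lemma mem_triple:
  fixes bp bm dp dm c :: real
  assumes bp: "bp > 0" and bm: "bm > 0" and bpd: "bp + dp > 0" and bmd: "bm + dm > 0"
    and dp: "dp \<noteq> 0" and dm: "dm \<noteq> 0"
    and u: "u \<in> eigenspace_HI bp bm dp dm c 0 0" and j: "(i, j, l) \<in> {(1,2,3), (4,5,6)}"
  defines "tp \<equiv> (bp + dp) / bp" and "tm \<equiv> (bm + dm) / bm"
  defines "x \<equiv> (\<lambda>n. u n $ i)" and "y \<equiv> (\<lambda>n. u n $ j)" and "z \<equiv> (\<lambda>n. u n $ l)"
  shows "x = solx tp tm (x 0) (z (-1)) \<and> y = soly tp tm (x 0) (z (-1)) \<and> z = solz tp tm (x 0) (z (-1))
    \<and> of_real (bp * (1 + gr tp)) * x 0 + of_real c * z (-1) = 0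
    \<and> of_real c * x 0 + of_real (bm * (1 + gr tm)) * z (-1) = 0"
proof -
  have l2: "l2seq u" and H: "HI bp bm dp dm c 0 u = cscale 0 u" using u unfolding eigenspace_HI_def by auto
  have E: "eqs bp bm dp dm c x y z" using H j unfolding HI_eqs x_def y_def z_def by auto
  have lx: "(\<lambda>m. x (int m)) \<longlonglongrightarrow> 0" unfolding x_def by (rule l2_comp_lim(1)[OF l2])
  have lz: "(\<lambda>m. z (-1 - int m)) \<longlonglongrightarrow> 0" unfolding z_def by (rule l2_comp_lim(2)[OF l2])
  note U = sol_unique[OF bp bm bpd bmd dp dm E lx lz]
  show ?thesis using U unfolding tp_def tm_def by blast
qed

theorem theorem9:
  fixes bp bm dp dm c :: real
  assumes "bp > 0" and "bm > 0"
    and "bp + dp > 0" and "bm + dm > 0"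
    and "dp \<noteq> 0" and "dm \<noteq> 0"
    and "c > 0"
  shows "vector_space.dim cscale (eigenspace_HI bp bm dp dm c 0 0) = 2 \<longleftrightarrow>
         (bp + dp) * (bm + dm) * f1 bp dp * f1 bm dm = c^2"
proof -
  note bp = assms(1) and bm = assms(2) and bpd = assms(3) and bmd = assms(4) and dp = assms(5) and dm = assms(6)
    and c0 = assms(7)
  interpret cs: vector_space cscale by (rule vs_cscale)
  define tp where "tp = (bp + dp) / bp"
  define tm where "tm = (bm + dm) / bm"
  define P where "P = bp * (1 + gr tp)"
  define Q where "Q = bm * (1 + gr tm)"
  define E where "E = eigenspace_HI bp bm dp dm c 0 0"
  have tp0: "tp > 0" unfolding tp_def using bp bpd by simp
  have tm0: "tm > 0" unfolding tm_def using bm bmd by simp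
  have tp1: "tp \<noteq> 1" unfolding tp_def using bp dp by (simp add: field_simps)
  have tm1: "tm \<noteq> 1" unfolding tm_def using bm dm by (simp add: field_simps)
  have fp: "(bp + dp) * f1 bp dp = - P" using f1_eq[OF bp bpd dp] unfolding P_def tp_def .
  have fm: "(bm + dm) * f1 bm dm = - Q" using f1_eq[OF bm bmd dm] unfolding Q_def tm_def .
  have RHS: "(bp + dp) * (bm + dm) * f1 bp dp * f1 bm dm = P * Q"
  proof -
    have "(bp + dp) * (bm + dm) * f1 bp dp * f1 bm dm = ((bp + dp) * f1 bp dp) * ((bm + dm) * f1 bm dm)"
      by (simp add: algebra_simps)
    thus ?thesis unfolding fp fm by simp
  qed
  have cne: "(of_real c :: complex) \<noteq> 0" using c0 by simp
  note MT = mem_triple[OF bp bm bpd bmd dp dm, folded tp_def tm_def P_def Q_def, folded E_def]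
  show ?thesis
  proof (cases "P * Q = c^2")
    case True
    define A where "A = (of_real c :: complex)"
    define B where "B = - (of_real P :: complex)"
    define wx where "wx = solx tp tm A B"
    define wy where "wy = soly tp tm A B"
    define wz where "wz = solz tp tm A B"
    have weqs: "eqs bp bm dp dm c wx wy wz" unfolding wx_def wy_def wz_def tp_def tm_def
    proof (rule sol_eqs[OF bp bm bpd bmd dp dm])
      show "of_real (bp * (1 + gr ((bp + dp) / bp))) * A + of_real c * B = 0"
        unfolding A_def B_def P_def[unfolded tp_def, symmetric] by simp
      have "of_real c * A + of_real Q * B = (of_real (c^2 - P * Q) :: complex)"
        unfolding A_def B_def by (simp add: algebra_simps power2_eq_square)
      thus "of_real c * A + of_real (bm * (1 + gr ((bm + dm) / bm))) * B = 0"
        unfolding Q_def[unfolded tm_def, symmetric] using True by simp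
    qed
    have wl2: "(\<lambda>n. (cmod (wx n))^2 + (cmod (wy n))^2 + (cmod (wz n))^2) summable_on UNIV"
      unfolding wx_def wy_def wz_def by (rule sol_l2[OF tp0 tp1 tm0 tm1])
    define U1 where "U1 = emb wx wy wz 1 0"
    define U2 where "U2 = emb wx wy wz 0 1"
    have wx0: "wx 0 = A" unfolding wx_def solx_def by simp
    have U1c: "U1 0 $ 1 = A" "U2 0 $ 1 = 0" "U2 0 $ 4 = A" unfolding U1_def U2_def emb_def wx0
      by (simp_all add: vector_6)
    have Esub: "E \<subseteq> cs.span {U1, U2}"
    proof
      fix u assume u: "u \<in> E"
      have coef: "\<exists>k. (\<lambda>n. u n $ i) = (\<lambda>n. k * wx n) \<and> (\<lambda>n. u n $ j) = (\<lambda>n. k * wy n) \<and> (\<lambda>n. u n $ l) = (\<lambda>n. k * wz n)"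
        if ijl: "(i, j, l) \<in> {(1,2,3), (4,5,6)}" for i j l
      proof -
        note M = MT[OF u[unfolded E_def] ijl]
        have Mx: "(\<lambda>n. u n $ i) = solx tp tm (u 0 $ i) (u (-1) $ l)" using M by blast
        have My: "(\<lambda>n. u n $ j) = soly tp tm (u 0 $ i) (u (-1) $ l)" using M by blast
        have Mz: "(\<lambda>n. u n $ l) = solz tp tm (u 0 $ i) (u (-1) $ l)" using M by blast
        have I1: "of_real P * u 0 $ i + of_real c * u (-1) $ l = 0" using M by blast
        define k where "k = u 0 $ i / A"
        have x0: "u 0 $ i = k * A" unfolding k_def A_def using cne by simp
        from I1 have "of_real c * u (-1) $ l = - (of_real P * u 0 $ i)" by (simp add: eq_neg_iff_add_eq_0 add.commute)
        hence zb: "u (-1) $ l = k * B" unfolding B_def k_def A_def using cne by (simp add: field_simps)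
        show ?thesis unfolding wx_def wy_def wz_def Mx[unfolded x0 zb] My[unfolded x0 zb] Mz[unfolded x0 zb] sol_scale by blast
      qed
      obtain k where k: "(\<lambda>n. u n $ 1) = (\<lambda>n. k * wx n)" "(\<lambda>n. u n $ 2) = (\<lambda>n. k * wy n)" "(\<lambda>n. u n $ 3) = (\<lambda>n. k * wz n)"
        using coef[of 1 2 3, OF insertI1] by blast
      obtain k' where k': "(\<lambda>n. u n $ 4) = (\<lambda>n. k' * wx n)" "(\<lambda>n. u n $ 5) = (\<lambda>n. k' * wy n)" "(\<lambda>n. u n $ 6) = (\<lambda>n. k' * wz n)"
        using coef[of 4 5 6, OF insertI2[OF insertI1]] by blast
      have "u = emb wx wy wz k k'"
      proof
        fix n show "u n = emb wx wy wz k k' n"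
          unfolding vec6_eq emb_def vector_6 using k k' by (auto simp: fun_eq_iff)
      qed
      hence "u = cscale k U1 + cscale k' U2" unfolding U1_def U2_def emb_comb .
      thus "u \<in> cs.span {U1, U2}"
        by (simp add: cs.span_add cs.span_scale cs.span_base)
    qed
    have Esup: "cs.span {U1, U2} \<subseteq> E"
    proof
      fix v assume "v \<in> cs.span {U1, U2}"
      then obtain k k' where "v - cscale k U1 = cscale k' U2"
        unfolding cs.span_insert[of U1 "{U2}"] cs.span_singleton by auto
      hence "v = cscale k' U2 + cscale k U1" by (simp add: diff_eq_eq)
      hence "v = cscale k U1 + cscale k' U2" by (simp add: add.commute)
      hence "v = emb wx wy wz k k'" unfolding U1_def U2_def emb_comb .
      thus "v \<in> E" unfolding E_def using emb_mem[OF weqs wl2] by simp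
    qed
    have Eeq: "E = cs.span {U1, U2}" using Esub Esup by blast
    have ne: "U1 \<noteq> U2" using U1c cne unfolding A_def by auto
    have indep: "cs.independent {U1, U2}"
    proof (rule cs.independent_insertI)
      show "U1 \<notin> cs.span {U2}"
      proof
        assume "U1 \<in> cs.span {U2}"
        then obtain k where "U1 = cscale k U2" unfolding cs.span_singleton by auto
        hence "U1 0 $ 1 = k * U2 0 $ 1" by (simp add: cscale_def)
        thus False using U1c cne unfolding A_def by simp
      qed
      show "cs.independent {U2}"
      proof (rule cs.independent_insertI)
        show "U2 \<notin> cs.span {}"
        proof
          assume "U2 \<in> cs.span {}"
          hence "U2 = 0" by simp
          hence "U2 0 $ 4 = 0" by simp
          thus False using U1c cne unfolding A_def by simp
        qed
      qed (rule cs.independent_empty)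
    qed
    have "cs.dim E = 2" unfolding Eeq cs.dim_span_eq_card_independent[OF indep] using ne by simp
    thus ?thesis unfolding E_def RHS using True by simp
  next
    case False
    have "E \<subseteq> {0}"
    proof
      fix u assume u: "u \<in> E"
      have zero: "(\<lambda>n. u n $ i) = (\<lambda>n. 0) \<and> (\<lambda>n. u n $ j) = (\<lambda>n. 0) \<and> (\<lambda>n. u n $ l) = (\<lambda>n. 0)"
        if ijl: "(i, j, l) \<in> {(1,2,3), (4,5,6)}" for i j l
      proof -
        note M = MT[OF u[unfolded E_def] ijl]
        have Mx: "(\<lambda>n. u n $ i) = solx tp tm (u 0 $ i) (u (-1) $ l)" using M by blast
        have My: "(\<lambda>n. u n $ j) = soly tp tm (u 0 $ i) (u (-1) $ l)" using M by blast
        have Mz: "(\<lambda>n. u n $ l) = solz tp tm (u 0 $ i) (u (-1) $ l)" using M by blast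
        have e1: "of_real P * u 0 $ i + of_real c * u (-1) $ l = 0" using M by blast
        have e2: "of_real c * u 0 $ i + of_real Q * u (-1) $ l = 0" using M by blast
        define a where "a = u 0 $ i"
        define b where "b = u (-1) $ l"
        note e1 = e1[folded a_def b_def] and e2 = e2[folded a_def b_def]
        have "(of_real (P * Q - c^2) :: complex) * a = of_real Q * (of_real P * a + of_real c * b) - of_real c * (of_real c * a + of_real Q * b)"
          by (simp add: algebra_simps power2_eq_square)
        hence da: "(of_real (P * Q - c^2) :: complex) * a = 0" unfolding e1 e2 by simp
        have "P * Q - c^2 \<noteq> 0" using False by simp
        hence "(of_real (P * Q - c^2) :: complex) \<noteq> 0" by (metis of_real_eq_0_iff)
        hence a0: "a = 0" using da by (simp only: mult_eq_0_iff) blast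
        hence "of_real c * b = 0" using e1 by simp
        hence b0: "b = 0" using cne by simp
        show ?thesis unfolding Mx My Mz a_def[symmetric] b_def[symmetric] a0 b0 sol_zero by simp
      qed
      have "u n = 0" for n
        using zero[of 1 2 3, OF insertI1] zero[of 4 5 6, OF insertI2[OF insertI1]] unfolding vec6_eq0 by (simp add: fun_eq_iff)
      thus "u \<in> {0}" by (simp add: fun_eq_iff)
    qed
    hence "E \<subseteq> cs.span {}" by simp
    hence "cs.dim E \<le> card ({} :: (int \<Rightarrow> complex^6) set)" by (rule cs.dim_le_card) simp
    hence "cs.dim E = 0" by simp
    thus ?thesis unfolding E_def RHS using False by simp
  qed
qed

end
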